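(* Let $d$, $n$, $r$ be positive integers with $\gcd(d,n)=1$ and $n$ odd. Then, modulo $(1-aq^{r+d\langle-r/d\rangle_n})(a-q^{d-r+d\langle (r-d)/d\rangle_n})$, $$ \sum_{k=0}^{n-1}\frac{2\,(aq^r;q^d)_k\,(q^{d-r}/a;q^d)_k\, q^{dk}}{(q^d;q^d)_{k}^2\,(1+q^{dk})} \equiv (-1)^{\langle-r/d\rangle_n}. $$
   Context: $a,q$ are indeterminates. The $q$-shifted factorial is $(y;q)_0=1$ and $(y;q)_m=(1-y)(1-yq)\cdots(1-yq^{m-1})$ for $m\geqslant1$. $\langle y\rangle_m$ denotes the least non-negative residue modulo $m$ of a rational number $y$ whose denominator is coprime to $m$. For rational functions $A,B$ and a polynomial $P$, $A\equiv B\pmod P$ means $A-B=P\cdot C/D$ for polynomials $C,D$ with $D$ coprime to $P$. *)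

theory Defs
  imports "HOL-Computational_Algebra.Computational_Algebra"
begin

text \<open>Rational functions in the indeterminates a, q over the rationals:
  the field of fractions of Q[q][a] (outer variable a, inner variable q).\<close>

type_synonym bipoly = "rat poly poly"
type_synonym ratfun = "rat poly poly fract"

definition var_a :: bipoly where "var_a = [:0, 1:]"
definition var_q :: bipoly where "var_q = [:[:0, 1:]:]"

definition fa :: ratfun where "fa = to_fract var_a"
definition fq :: ratfun where "fq = to_fract var_q"

definition qpoch :: "ratfun \<Rightarrow> ratfun \<Rightarrow> nat \<Rightarrow> ratfun" where
  "qpoch y b m = (\<Prod>i<m. 1 - y * b ^ i)"

definition lnr :: "rat \<Rightarrow> nat \<Rightarrow> nat" where
  "lnr y m = (THE k. k < m \<and> (\<exists>u v :: int. v \<noteq> 0 \<and> coprime v (int m) \<and>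
       y - of_nat k = of_int (int m * u) / of_int v))"

definition cong_rf :: "ratfun \<Rightarrow> ratfun \<Rightarrow> bipoly \<Rightarrow> bool" where
  "cong_rf A B P \<longleftrightarrow> (\<exists>C D :: bipoly. D \<noteq> 0 \<and> coprime D P \<and>
       A - B = to_fract P * to_fract C / to_fract D)"

end

theory Submission imports Defs "HOL-Computational_Algebra.Field_as_Ring" begin


lemma qpoch_0[simp]: "qpoch y b 0 = 1" by (simp add: qpoch_def)
lemma qpoch_Suc: "qpoch y b (Suc m) = qpoch y b m * (1 - y * b ^ m)"
  by (simp add: qpoch_def)
lemma qpoch_Suc_shift: "qpoch y b (Suc m) = (1 - y) * qpoch (y * b) b m"
  unfolding qpoch_def by (subst prod.lessThan_Suc_shift) (simp add: mult.assoc power_commutes)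
lemma qpoch_zero: assumes "y * b ^ i = 1" "i < m" shows "qpoch y b m = 0"
  unfolding qpoch_def using assms by (intro prod_zero) auto

definition FF :: "ratfun \<Rightarrow> nat \<Rightarrow> nat \<Rightarrow> ratfun" where
  "FF Q J k = 2 * qpoch (inverse (Q^J)) Q k * qpoch (Q^(J+1)) Q k * Q^k / ((qpoch Q Q k)^2 * (1 + Q^k))"
definition UU :: "ratfun \<Rightarrow> nat \<Rightarrow> nat \<Rightarrow> ratfun" where
  "UU Q M k = qpoch (inverse (Q^M)) Q k * qpoch (Q^M) Q k * Q^k / (qpoch Q Q k)^2"

locale qgood =
  fixes Q :: ratfun
  assumes Q0: "Q \<noteq> 0" and Q1: "\<And>i. i > 0 \<Longrightarrow> Q^i \<noteq> 1" and Qm1: "\<And>i. Q^i \<noteq> -1"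
begin

lemma qpoch_QQ_nz: "qpoch Q Q k \<noteq> 0"
proof (induction k)
  case (Suc k)
  have "Q * Q^k \<noteq> 1" using Q1[of "Suc k"] by simp
  then show ?case using Suc by (simp add: qpoch_Suc)
qed simp

lemma onep_nz: "1 + Q^k \<noteq> 0"
  using Qm1[of k] by (metis add.commute add_eq_0_iff)

lemma FF_step: "FF Q (J+1) k + FF Q J k = 2 * UU Q (J+1) k"
proof (cases k)
  case 0 then show ?thesis by (simp add: FF_def UU_def)
next
  case (Suc k')
  have e1: "qpoch (inverse (Q^(J+1))) Q k = (1 - inverse (Q^(J+1))) * qpoch (inverse (Q^J)) Q k'"
    unfolding Suc qpoch_Suc_shift using Q0 by (simp add: field_simps)
  have e2: "qpoch (inverse (Q^J)) Q k = qpoch (inverse (Q^J)) Q k' * (1 - inverse (Q^J) * Q^k')"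
    unfolding Suc qpoch_Suc ..
  have e3: "qpoch (Q^(J+1+1)) Q k = qpoch (Q^(J+2)) Q k' * (1 - Q^(J+2) * Q^k')"
    unfolding Suc qpoch_Suc by simp
  have e4: "qpoch (Q^(J+1)) Q k = (1 - Q^(J+1)) * qpoch (Q^(J+2)) Q k'"
    unfolding Suc qpoch_Suc_shift by (simp add: field_simps)
  have nz: "qpoch Q Q k \<noteq> 0" "1 + Q^k \<noteq> 0" by (rule qpoch_QQ_nz, rule onep_nz)
  have QJ: "Q^J \<noteq> 0" using Q0 by simp
  have gen: "2*((1 - inverse y)*P1)*(P2*(1 - y*Q*x))*(Q*x)/(D^2*(1+Q*x))
      + 2*(P1*(1 - Q*inverse y*x))*((1-y)*P2)*(Q*x)/(D^2*(1+Q*x))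
      = 2*((1-inverse y)*P1)*((1-y)*P2)*(Q*x)/D^2"
    if "y \<noteq> 0" "D \<noteq> 0" "1+Q*x \<noteq> 0" for y x P1 P2 D :: ratfun
  proof -
    define z where "z = inverse y"
    have yz: "y * z = 1" using that by (simp add: z_def)
    have E: "D^2*(1+Q*x) \<noteq> 0" using that by simp
    have "2*((1-z)*P1)*((1-y)*P2)*(Q*x)/D^2 = 2*((1-z)*P1)*((1-y)*P2)*(Q*x)*(1+Q*x)/(D^2*(1+Q*x))"
      using that by simp
    also have "2*((1-z)*P1)*((1-y)*P2)*(Q*x)*(1+Q*x) = 2*((1 - z)*P1)*(P2*(1 - y*Q*x))*(Q*x) + 2*(P1*(1 - Q*z*x))*((1-y)*P2)*(Q*x)"
      using yz by algebra
    finally show ?thesis unfolding z_def[symmetric] by (simp add: add_divide_distrib)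
  qed
  define P1 where "P1 = qpoch (inverse (Q^J)) Q k'"
  define P2 where "P2 = qpoch (Q^(J+2)) Q k'"
  have a1: "Q^(J+2)*Q^k' = Q^(J+1)*Q*Q^k'" by (simp add: power_add mult_ac)
  have a2: "Q^k = Q*Q^k'" by (simp add: Suc)
  have a3: "inverse (Q^J) * Q^k' = Q * inverse (Q^(J+1)) * Q^k'" using Q0 by (simp add: field_simps)
  have h1: "FF Q (J+1) k = 2*((1 - inverse (Q^(J+1)))*P1)*(P2*(1 - Q^(J+1)*Q*Q^k'))*(Q*Q^k')/((qpoch Q Q k)^2*(1+Q*Q^k'))"
    unfolding FF_def e1 e3 a1 a2 P1_def P2_def by simp
  have h2: "FF Q J k = 2*(P1*(1 - Q*inverse (Q^(J+1))*Q^k'))*((1-Q^(J+1))*P2)*(Q*Q^k')/((qpoch Q Q k)^2*(1+Q*Q^k'))"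
    unfolding FF_def e2 e4 a2 a3 P1_def P2_def by simp
  have h3: "UU Q (J+1) k = ((1 - inverse (Q^(J+1)))*P1)*((1-Q^(J+1))*P2)*(Q*Q^k')/(qpoch Q Q k)^2"
    unfolding UU_def e1 e4 a2 P1_def P2_def by simp
  show ?thesis unfolding h1 h2 h3
    using gen[of "Q^(J+1)" "qpoch Q Q k" "Q^k'" P1 P2] nz Q0 a2 by (simp add: mult.assoc)
qed

lemma tele: assumes ab: "a * b = 1"
  shows "(\<Sum>k\<le>K. qpoch a Q k * qpoch b Q k * Q^k / (qpoch Q Q k)^2)
     = qpoch (a*Q) Q K * qpoch (b*Q) Q K / (qpoch Q Q K)^2"
proof (induction K)
  case 0 then show ?case by simp
next
  case (Suc K)
  define A where "A = qpoch (a*Q) Q K"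
  define B where "B = qpoch (b*Q) Q K"
  define D where "D = qpoch Q Q K"
  define z where "z = Q * Q^K"
  have D0: "D \<noteq> 0" unfolding D_def by (rule qpoch_QQ_nz)
  have z1: "1 - z \<noteq> 0" using Q1[of "Suc K"] unfolding z_def by simp
  have gen: "A*B/D^2 + ((1-a)*A)*((1-b)*B)*z/((D*(1-z))^2) = (A*(1-a*Q*Q^K))*(B*(1-b*Q*Q^K))/((D*(1-z))^2)"
  proof -
    have "A*B/D^2 = A*B*(1-z)^2/((D*(1-z))^2)" using D0 z1 by (simp add: power_mult_distrib)
    moreover have "A*B*(1-w)^2 + ((1-a)*A)*((1-b)*B)*w = (A*(1-a*w))*(B*(1-b*w))" for w
      using ab by algebra
    ultimately have "A*B/D^2 + ((1-a)*A)*((1-b)*B)*z/((D*(1-z))^2) = (A*(1-a*z))*(B*(1-b*z))/((D*(1-z))^2)"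
       by (simp add: add_divide_distrib[symmetric])
    then show ?thesis unfolding z_def by (simp add: mult.assoc)
  qed
  have "(\<Sum>k\<le>Suc K. qpoch a Q k * qpoch b Q k * Q^k / (qpoch Q Q k)^2)
     = A*B/D^2 + ((1-a)*A)*((1-b)*B)*z/((D*(1-z))^2)"
    unfolding sum.atMost_Suc Suc A_def B_def D_def z_def
    by (simp add: qpoch_Suc_shift[of a] qpoch_Suc_shift[of b] qpoch_Suc[of Q])
  also have "\<dots> = qpoch (a*Q) Q (Suc K) * qpoch (b*Q) Q (Suc K) / (qpoch Q Q (Suc K))^2"
    unfolding gen unfolding A_def B_def D_def z_def by (simp add: qpoch_Suc mult.assoc)
  finally show ?case .
qed

lemma UU_sum: assumes "M \<ge> 1" "M < N" shows "(\<Sum>k<N. UU Q M k) = 0"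
proof -
  have QM: "Q^M \<noteq> 0" using Q0 by simp
  have N: "{..<N} = {..N-1}" using assms by auto
  have "(\<Sum>k<N. UU Q M k) = qpoch (inverse (Q^M)*Q) Q (N-1) * qpoch (Q^M*Q) Q (N-1) / (qpoch Q Q (N-1))^2"
    unfolding N UU_def by (rule tele) (use QM in simp)
  also have "qpoch (inverse (Q^M)*Q) Q (N-1) = 0"
  proof (rule qpoch_zero[of _ _ "M-1"])
    have "Q^M = Q * Q^(M-1)" using assms by (metis power_Suc Suc_pred' less_le_trans zero_less_one)
    then show "inverse (Q ^ M) * Q * Q ^ (M - 1) = 1" using QM by (simp add: field_simps)
  qed (use assms in auto)
  finally show ?thesis by simp
qed

lemma FF_sum: "J < N \<Longrightarrow> (\<Sum>k<N. FF Q J k) = (-1)^J"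
proof (induction J)
  case 0
  have "(\<Sum>k<N. FF Q 0 k) = (\<Sum>k\<in>{0}. FF Q 0 k)"
  proof (rule sum.mono_neutral_right)
    show "\<forall>i\<in>{..<N} - {0}. FF Q 0 i = 0"
    proof
      fix i assume "i \<in> {..<N} - {0}"
      then have "qpoch 1 Q i = 0" by (intro qpoch_zero[of _ _ 0]) auto
      then show "FF Q 0 i = 0" by (simp add: FF_def)
    qed
  qed (use 0 in auto)
  then show ?case by (simp add: FF_def)
next
  case (Suc J)
  have "(\<Sum>k<N. FF Q (J+1) k) + (\<Sum>k<N. FF Q J k) = 2 * (\<Sum>k<N. UU Q (J+1) k)"
  proof -
    have "\<And>k. FF Q (Suc J) k + FF Q J k = 2 * UU Q (Suc J) k" using FF_step by simp
    then show ?thesis by (simp add: sum.distrib[symmetric] sum_distrib_left)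
  qed
  also have "\<dots> = 0" using UU_sum[of "J+1" N] Suc.prems by simp
  finally show ?case using Suc by (simp add: eq_neg_iff_add_eq_0[symmetric])
qed

end


definition isE :: "ratfun \<Rightarrow> bool" where
  "isE z \<longleftrightarrow> (\<exists>u v::rat poly. v \<noteq> 0 \<and> z = to_fract [:u:] / to_fract [:v:])"

lemma tf_const_mult: "to_fract [:u:] * to_fract [:v:] = to_fract [:u*v:]"
  by (simp flip: to_fract_mult)
lemma tf_const_add: "to_fract [:u:] + to_fract [:v:] = to_fract [:u+v:]"
  by (simp flip: to_fract_add)

lemma isE_const: "isE (to_fract [:u:])"
  unfolding isE_def by (rule exI[of _ u], rule exI[of _ 1]) (simp add: one_pCons[symmetric])

lemma isE_0[simp]: "isE 0" using isE_const[of 0] by simp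
lemma isE_1[simp]: "isE 1" using isE_const[of 1] by (simp add: one_pCons[symmetric])

lemma isE_add: assumes "isE x" "isE y" shows "isE (x + y)"
proof -
  obtain u1 v1 where 1: "v1 \<noteq> 0" "x = to_fract [:u1:] / to_fract [:v1:]" using assms(1) isE_def by auto
  obtain u2 v2 where 2: "v2 \<noteq> 0" "y = to_fract [:u2:] / to_fract [:v2:]" using assms(2) isE_def by auto
  have n: "to_fract [:v1:] \<noteq> 0" "to_fract [:v2:] \<noteq> 0" using 1 2 by auto
  have "x + y = (to_fract[:u1:]*to_fract[:v2:] + to_fract[:u2:]*to_fract[:v1:]) / (to_fract [:v1:]*to_fract [:v2:])"
    unfolding 1 2 using n by (simp add: field_simps)
  also have "\<dots> = to_fract [:u1*v2 + u2*v1:] / to_fract [:v1*v2:]"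
    by (simp only: tf_const_mult tf_const_add)
  finally have "x + y = to_fract [:u1*v2 + u2*v1:] / to_fract [:v1*v2:]" .
  then show ?thesis unfolding isE_def using 1 2 by (intro exI[of _ "u1*v2 + u2*v1"] exI[of _ "v1*v2"]) simp
qed

lemma isE_mult: assumes "isE x" "isE y" shows "isE (x * y)"
proof -
  obtain u1 v1 where 1: "v1 \<noteq> 0" "x = to_fract [:u1:] / to_fract [:v1:]" using assms(1) isE_def by auto
  obtain u2 v2 where 2: "v2 \<noteq> 0" "y = to_fract [:u2:] / to_fract [:v2:]" using assms(2) isE_def by auto
  have "x * y = (to_fract[:u1:]*to_fract[:u2:]) / (to_fract [:v1:]*to_fract [:v2:])"
    unfolding 1 2 by simp
  also have "\<dots> = to_fract [:u1*u2:] / to_fract [:v1*v2:]"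
    by (simp only: tf_const_mult)
  finally have "x * y = to_fract [:u1*u2:] / to_fract [:v1*v2:]" .
  then show ?thesis unfolding isE_def using 1 2 by (intro exI[of _ "u1*u2"] exI[of _ "v1*v2"]) simp
qed

lemma isE_uminus: assumes "isE x" shows "isE (- x)"
proof -
  obtain u1 v1 where 1: "v1 \<noteq> 0" "x = to_fract [:u1:] / to_fract [:v1:]" using assms(1) isE_def by auto
  have "[:-u1:] = - [:u1:]" by simp
  then have "- x = to_fract [:-u1:] / to_fract [:v1:]" unfolding 1 by (simp only: to_fract_uminus minus_divide_left)
  then show ?thesis unfolding isE_def using 1 by blast
qed

lemma isE_diff: "isE x \<Longrightarrow> isE y \<Longrightarrow> isE (x - y)"
  using isE_add[of x "-y"] isE_uminus[of y] by simp

lemma isE_inverse: assumes "isE x" shows "isE (inverse x)"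
proof -
  obtain u1 v1 where 1: "v1 \<noteq> 0" "x = to_fract [:u1:] / to_fract [:v1:]" using assms(1) isE_def by auto
  show ?thesis
  proof (cases "u1 = 0")
    case True then show ?thesis using 1 by simp
  next
    case False
    have "inverse x = to_fract [:v1:] / to_fract [:u1:]" using 1 by simp
    then show ?thesis unfolding isE_def using False by blast
  qed
qed

lemma isE_divide: "isE x \<Longrightarrow> isE y \<Longrightarrow> isE (x / y)"
  using isE_mult[of x "inverse y"] isE_inverse[of y] by (simp add: divide_inverse)

lemma isE_power: "isE x \<Longrightarrow> isE (x ^ n)"
  by (induction n) (auto intro: isE_mult)

lemma isE_sum: "(\<And>i. i \<in> A \<Longrightarrow> isE (f i)) \<Longrightarrow> isE (sum f A)"
  by (induction A rule: infinite_finite_induct) (auto intro: isE_add)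

lemma isE_prod: "(\<And>i. i \<in> A \<Longrightarrow> isE (f i)) \<Longrightarrow> isE (prod f A)"
  by (induction A rule: infinite_finite_induct) (auto intro: isE_mult)

lemma isE_fq: "isE fq" unfolding fq_def var_q_def by (rule isE_const)

lemma isE_powi: "isE x \<Longrightarrow> isE (x powi k)"
  by (cases "k \<ge> 0") (auto simp: power_int_def intro: isE_power isE_inverse)

lemma isE_numeral: "isE (numeral k)"
proof -
  have "(numeral k :: ratfun) = to_fract [:numeral k:]"
    by (metis of_nat_numeral of_nat_poly to_fract_def Fract_of_nat_eq) 
  then show ?thesis using isE_const by metis
qed

definition isEp :: "ratfun poly \<Rightarrow> bool" where "isEp p \<longleftrightarrow> (\<forall>i. isE (coeff p i))"

lemma isEp_add: "isEp p \<Longrightarrow> isEp q \<Longrightarrow> isEp (p + q)"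
  unfolding isEp_def by (auto intro: isE_add)
lemma isEp_diff: "isEp p \<Longrightarrow> isEp q \<Longrightarrow> isEp (p - q)"
  unfolding isEp_def by (auto intro: isE_diff)
lemma isEp_mult: "isEp p \<Longrightarrow> isEp q \<Longrightarrow> isEp (p * q)"
  unfolding isEp_def coeff_mult by (auto intro!: isE_sum isE_mult)
lemma isEp_smult: "isE c \<Longrightarrow> isEp p \<Longrightarrow> isEp (smult c p)"
  unfolding isEp_def by (auto intro: isE_mult)
lemma isEp_pCons: "isE c \<Longrightarrow> isEp p \<Longrightarrow> isEp (pCons c p)"
  unfolding isEp_def by (auto simp: coeff_pCons split: nat.splits)
lemma isEp_0[simp]: "isEp 0" unfolding isEp_def by simp
lemma isEp_const: "isE c \<Longrightarrow> isEp [:c:]" by (intro isEp_pCons) auto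
lemma isEp_1[simp]: "isEp 1" by (simp add: one_pCons isEp_const)
lemma isEp_monom: "isE c \<Longrightarrow> isEp (monom c n)"
  unfolding isEp_def by (auto simp: coeff_monom)
lemma isEp_sum: "(\<And>i. i \<in> A \<Longrightarrow> isEp (f i)) \<Longrightarrow> isEp (sum f A)"
  by (induction A rule: infinite_finite_induct) (auto intro: isEp_add)
lemma isEp_prod: "(\<And>i. i \<in> A \<Longrightarrow> isEp (f i)) \<Longrightarrow> isEp (prod f A)"
  by (induction A rule: infinite_finite_induct) (auto intro: isEp_mult)

lemma isE_poly: "isEp p \<Longrightarrow> isE c \<Longrightarrow> isE (poly p c)"
  unfolding poly_altdef isEp_def by (auto intro!: isE_sum isE_mult isE_power)

lemma isEp_synth: "isEp p \<Longrightarrow> isE c \<Longrightarrow> isEp (synthetic_div p c)"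
proof (induction p)
  case (pCons a p)
  have "isEp p" using pCons.prems unfolding isEp_def by (metis coeff_pCons_Suc)
  then show ?case using pCons by (auto intro!: isEp_pCons isE_poly)
qed simp

lemma eval_isEp: "isEp W \<Longrightarrow> \<exists>C v. v \<noteq> 0 \<and> poly W fa = to_fract C / to_fract [:v:]"
proof (induction W)
  case 0 then show ?case by (intro exI[of _ 0] exI[of _ 1]) simp
next
  case (pCons w W)
  have "isEp W" using pCons.prems unfolding isEp_def by (metis coeff_pCons_Suc)
  then obtain C v where Cv: "v \<noteq> 0" "poly W fa = to_fract C / to_fract [:v:]" using pCons by blast
  have "isE w" using pCons.prems unfolding isEp_def by (metis coeff_pCons_0)
  then obtain u1 v1 where 1: "v1 \<noteq> 0" "w = to_fract [:u1:] / to_fract [:v1:]" using isE_def by auto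
  have n: "to_fract [:v1:] \<noteq> 0" "to_fract [:v:] \<noteq> 0" using 1 Cv by auto
  have "poly (pCons w W) fa = (to_fract [:u1:] * to_fract [:v:] + fa * to_fract C * to_fract [:v1:]) / (to_fract [:v1:] * to_fract [:v:])"
    unfolding 1 using Cv n by (simp add: field_simps)
  also have "\<dots> = to_fract ([:u1*v:] + var_a * C * [:v1:]) / to_fract [:v1*v:]"
    unfolding fa_def by (simp only: tf_const_mult to_fract_add to_fract_mult)
  finally have "poly (pCons w W) fa = to_fract ([:u1*v:] + var_a * C * [:v1:]) / to_fract [:v1*v:]" .
  then show ?case using 1 Cv by (intro exI[of _ "[:u1*v:] + var_a * C * [:v1:]"] exI[of _ "v1*v"]) simp
qed



lemma to_fract_power: "to_fract (x ^ n) = to_fract x ^ n"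
  by (induction n) simp_all

lemma var_q_pow: "var_q ^ m = [:[:0,1:]^m:]"
  unfolding var_q_def by (induction m) (simp_all)

lemma fq_pow: "fq ^ m = to_fract (var_q ^ m)"
  by (simp add: fq_def to_fract_power)

lemma fq_nz: "fq \<noteq> 0" by (simp add: fq_def var_q_def)
lemma fa_nz: "fa \<noteq> 0" by (simp add: fa_def var_a_def)

lemma fq_pow_ne1: assumes "m > 0" shows "fq ^ m \<noteq> 1"
proof
  assume "fq ^ m = 1"
  then have "var_q ^ m = 1" unfolding fq_pow by (metis to_fract_1 to_fract_eq_iff)
  then have "[:[:0,1:]^m:] = ([:1:]::bipoly)" by (simp add: var_q_pow one_pCons)
  then have "([:0,1:]::rat poly)^m = 1" by simp
  then have "degree (([:0,1:]::rat poly)^m) = 0" by simp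
  then show False using degree_linear_power[of "0::rat" m] assms by simp
qed

lemma fq_pow_nem1: "fq ^ m \<noteq> -1"
proof
  assume "fq ^ m = -1"
  then have "var_q ^ m = -1" unfolding fq_pow by (metis to_fract_1 to_fract_uminus to_fract_eq_iff)
  then have "[:[:0,1:]^m:] = ([:-1:]::bipoly)" by (simp add: var_q_pow one_pCons)
  then have h: "([:0,1:]::rat poly)^m = -1" by simp
  then have "degree (([:0,1:]::rat poly)^m) = 0" by simp
  then have "m = 0" using degree_linear_power[of "0::rat" m] by simp
  then show False using h by simp
qed

lemma coprime_const:
  fixes c :: "rat poly" and P :: bipoly
  assumes "c \<noteq> 0" "is_unit (coeff P i)" shows "coprime [:c:] P"
proof (rule coprimeI)
  fix g assume g1: "g dvd [:c:]" and g2: "g dvd P"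
  have "degree g = 0" using dvd_imp_degree_le[OF g1] assms(1) by simp
  then have g: "g = [:coeff g 0:]" by (metis degree_0_id)
  have "coeff g 0 dvd coeff P i" using g2 g const_poly_dvd_iff by metis
  then have "is_unit (coeff g 0)" using assms(2) dvd_unit_imp_unit by blast
  then show "is_unit g" using g is_unit_const_poly_iff by metis
qed

lemma coeff_P1: "coeff (1 - var_a * X) 0 = 1"
  by (simp add: var_a_def)

lemma coprime_a_P1: "coprime var_a (1 - var_a * X)"
proof (rule coprimeI)
  fix g assume "g dvd var_a" "g dvd 1 - var_a * X"
  then have "g dvd (1 - var_a * X) + var_a * X" by (intro dvd_add) auto
  then show "is_unit g" by simp
qed

lemma coprime_a_P2a: "coprime var_a (var_a * X - 1)"
proof (rule coprimeI)
  fix g assume "g dvd var_a" "g dvd var_a * X - 1"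
  then have "g dvd var_a * X - (var_a * X - 1)" by (rule dvd_diff[OF dvd_mult2])
  moreover have "var_a * X - (var_a * X - 1) = 1" by simp
  ultimately show "is_unit g" by metis
qed

lemma coprime_a_P2b: assumes "c \<noteq> 0" shows "coprime var_a (var_a - [:c:])"
proof (rule coprimeI)
  fix g assume g: "g dvd var_a" "g dvd var_a - [:c:]"
  then have "g dvd var_a - (var_a - [:c:])" by (rule dvd_diff)
  moreover have "var_a - (var_a - [:c:]) = [:c:]" by simp
  ultimately have "g dvd [:c:]" by metis
  moreover have "coprime [:c:] var_a" by (rule coprime_const[of _ _ 1]) (use assms in \<open>simp_all add: var_a_def\<close>)
  ultimately show "is_unit g" using g(1) coprime_common_divisor by blast
qed

lemma lnr_unique:
  assumes "k < m" "v \<noteq> 0" "coprime v (int m)" "y - of_nat k = of_int (int m * u) / of_int v"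
  shows "lnr y m = k"
  unfolding lnr_def
proof (rule the_equality)
  show "k < m \<and> (\<exists>u v. v \<noteq> 0 \<and> coprime v (int m) \<and> y - of_nat k = of_int (int m * u) / of_int v)"
    using assms by blast
next
  fix k' assume "k' < m \<and> (\<exists>u v. v \<noteq> 0 \<and> coprime v (int m) \<and> y - of_nat k' = of_int (int m * u) / of_int v)"
  then obtain u' v' where k': "k' < m" "v' \<noteq> 0" "coprime v' (int m)" "y - of_nat k' = of_int (int m * u') / of_int v'"
    by blast
  have "(of_nat k - of_nat k' :: rat) = of_int (int m * u') / of_int v' - of_int (int m * u) / of_int v"
    using assms(4) k'(4) by (simp add: algebra_simps)
  then have "(of_nat k - of_nat k' :: rat) * (of_int v * of_int v') = of_int (int m * u') * of_int v - of_int (int m * u) * of_int v'"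
    using assms(2) k'(2) by (simp add: field_simps)
  then have "(of_int ((int k - int k') * (v * v')) :: rat) = of_int (int m * (u' * v - u * v'))"
    by (simp add: algebra_simps)
  then have eq: "(int k - int k') * (v * v') = int m * (u' * v - u * v')" by linarith
  then have "int m dvd (int k - int k') * (v * v')" by simp
  moreover have "coprime (int m) (v * v')" using assms(3) k'(3) by (simp add: coprime_commute)
  ultimately have "int m dvd (int k - int k')" using coprime_dvd_mult_left_iff by blast
  then show "k' = k"
  proof -
    assume d: "int m dvd (int k - int k')"
    show ?thesis
    proof (rule ccontr)
      assume "k' \<noteq> k"
      then have "int k - int k' \<noteq> 0" by simp
      from dvd_imp_le_int[OF this d] have "\<bar>int m\<bar> \<le> \<bar>int k - int k'\<bar>" .
      then show False using assms(1) k'(1) by linarith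
    qed
  qed
qed

lemma exists_j0: fixes d n r :: nat assumes "d > 0" "n > 0" "coprime d n"
  shows "\<exists>j0 t. j0 < n \<and> r + d * j0 = n * t"
proof -
  obtain x y where xy: "d * x = n * y + gcd d n" using bezout_nat[of d n] assms(1) by auto
  then have xy: "d * x = n * y + 1" using assms(3) by simp
  obtain n' where n': "n = Suc n'" using assms(2) by (cases n) auto
  define j0 where "j0 = (r*n'*x) mod n"
  have "r + d * (r*n'*x) = r + r*n'*(n*y+1)" using xy by (metis mult.assoc mult.commute)
  also have "\<dots> = n * (r + r*n'*y)" using n' by (simp add: algebra_simps)
  finally have h: "n dvd r + d * (r*n'*x)" by simp
  have "r*n'*x = j0 + n * (r*n'*x div n)" unfolding j0_def by simp
  then have "d*(r*n'*x) = d*(j0 + n * (r*n'*x div n))" by simp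
  then have "r + d * (r*n'*x) = (r + d * j0) + n * (d * (r*n'*x div n))" by (simp add: algebra_simps)
  with h have "n dvd r + d * j0" by (metis dvd_add_left_iff dvd_triv_left)
  then obtain t where "r + d * j0 = n * t" by blast
  moreover have "j0 < n" unfolding j0_def using assms by simp
  ultimately show ?thesis by blast
qed

theorem corollary1p4:
  fixes d n r :: nat
  assumes "d > 0" and "n > 0" and "r > 0" and "coprime d n" and "odd n"
  defines "j \<equiv> lnr (- of_nat r / of_nat d) n"
      and "e2 \<equiv> int d - int r + int d * int (lnr ((of_nat r - of_nat d) / of_nat d) n)"
  shows "cong_rf
     (\<Sum>k<n. 2 * qpoch (fa * fq ^ r) (fq ^ d) k * qpoch (fq powi (int d - int r) / fa) (fq ^ d) k
              * fq ^ (d * k) / ((qpoch (fq ^ d) (fq ^ d) k) ^ 2 * (1 + fq ^ (d * k))))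
     ((-1) ^ j)
     ((1 - var_a * var_q ^ (r + d * j)) *
      (var_a * var_q ^ nat (- e2) - var_q ^ nat e2))"
proof -
  obtain j0 t where jt: "j0 < n" "r + d * j0 = n * t" using exists_j0[OF assms(1,2,4)] by blast
  have cdn: "coprime (int d) (int n)" using assms(4) by simp
  have dq: "(of_nat d :: rat) \<noteq> 0" using assms(1) by simp
  have jtq: "(of_nat r + of_nat d * of_nat j0 :: rat) = of_nat n * of_nat t"
    using jt(2) by (metis of_nat_add of_nat_mult)
  have jj: "j = j0"
    unfolding j_def
  proof (rule lnr_unique[where v="int d" and u="- int t"])
    show "(- of_nat r / of_nat d :: rat) - of_nat j0 = of_int (int n * - int t) / of_int (int d)"
      using jtq dq by (simp add: field_simps; simp add: jtq[symmetric] algebra_simps)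
  qed (use jt assms cdn in auto)
  define m0 where "m0 = n - 1 - j0"
  have m0q: "(of_nat m0 :: rat) = of_nat n - 1 - of_nat j0" unfolding m0_def using jt(1) by (simp add: of_nat_diff)
  have mm: "lnr ((of_nat r - of_nat d) / of_nat d) n = m0"
  proof (rule lnr_unique[where v="int d" and u="int t - int d"])
    show "((of_nat r - of_nat d) / of_nat d :: rat) - of_nat m0 = of_int (int n * (int t - int d)) / of_int (int d)"
      unfolding m0q using jtq dq by (simp add: field_simps)
  qed (use jt assms cdn m0_def in auto)
  have m0i: "int m0 = int n - 1 - int j0" unfolding m0_def using jt(1) by simp
  have e2v: "e2 = int n * (int d - int t)"
  proof -
    have "int r + int d * int j0 = int n * int t" using jt(2) by (metis of_nat_add of_nat_mult)
    then show ?thesis unfolding e2_def mm m0i by (simp add: algebra_simps)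
  qed
  have e2m: "e2 = int d - int r + int d * int m0" unfolding e2_def mm ..
  have par: "((-1)::ratfun) ^ m0 = (-1) ^ j0"
  proof -
    have "even m0 = even j0" unfolding m0_def using assms(5) jt(1) by presburger
    then show ?thesis by (cases "even j0") (simp_all)
  qed
  define Q where "Q = fq ^ d"
  interpret qgood Q
  proof
    show "Q \<noteq> 0" unfolding Q_def using fq_nz by simp
    show "\<And>i. i > 0 \<Longrightarrow> Q^i \<noteq> 1" unfolding Q_def power_mult[symmetric] using fq_pow_ne1 assms(1) by simp
    show "\<And>i. Q^i \<noteq> -1" unfolding Q_def power_mult[symmetric] using fq_pow_nem1 by simp
  qed
  define L where "L = r + d * j"
  have L: "L = n * t" unfolding L_def jj using jt(2) .
  define B :: ratfun where "B = (-1) ^ j"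
  define cpd where "cpd = fq powi (int d - int r)"
  have cpd: "cpd = fq^d / fq^r" unfolding cpd_def using fq_nz by (simp add: power_int_diff)
  define T where "T y = (\<Sum>k<n. 2 * qpoch (y * fq ^ r) (fq ^ d) k * qpoch (cpd / y) (fq ^ d) k
              * fq ^ (d * k) / ((qpoch (fq ^ d) (fq ^ d) k) ^ 2 * (1 + fq ^ (d * k))))" for y
  define c1 where "c1 = inverse (fq ^ L)"
  define c2 where "c2 = fq powi e2"
  have c1nz: "c1 \<noteq> 0" unfolding c1_def using fq_nz by simp
  have c2nz: "c2 \<noteq> 0" unfolding c2_def using fq_nz by simp
  have Tc1: "T c1 = B"
  proof -
    have a1: "c1 * fq ^ r = inverse (Q ^ j)" unfolding c1_def L_def Q_def using fq_nz
      by (simp add: power_add power_mult field_simps)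
    have a2: "cpd / c1 = Q ^ (j+1)" unfolding c1_def L_def Q_def cpd using fq_nz
      by (simp add: power_add power_mult field_simps)
    have "T c1 = (\<Sum>k<n. FF Q j k)" unfolding T_def a1 a2 FF_def Q_def by (simp add: power_mult)
    also have "\<dots> = B" unfolding B_def using FF_sum jj jt(1) by simp
    finally show ?thesis .
  qed
  have Tc2: "T c2 = B"
  proof -
    have a1: "c2 * fq ^ r = Q ^ (m0 + 1)"
    proof -
      have "c2 * fq ^ r = fq powi (e2 + int r)" unfolding c2_def using fq_nz
        by (simp add: power_int_add)
      also have "e2 + int r = int (d * (m0+1))" unfolding e2m by (simp add: algebra_simps)
      finally have "c2 * fq ^ r = fq powi (int (d * (m0+1)))" .
      then show ?thesis unfolding Q_def power_int_of_nat by (simp add: power_mult[symmetric] power_add)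
    qed
    have a2: "cpd / c2 = inverse (Q ^ m0)"
    proof -
      have "cpd / c2 = fq powi (int d - int r - e2)" unfolding c2_def cpd_def using fq_nz
        by (simp add: power_int_diff)
      also have "int d - int r - e2 = - int (d * m0)" unfolding e2m by simp
      finally have "cpd / c2 = fq powi (- int (d * m0))" .
      then show ?thesis unfolding Q_def power_int_minus power_int_of_nat by (simp add: power_mult)
    qed
    have "T c2 = (\<Sum>k<n. FF Q m0 k)" unfolding T_def a1 a2 FF_def Q_def power_mult by (simp add: mult_ac)
    also have "\<dots> = (-1)^m0" using FF_sum m0_def jt(1) by simp
    finally show ?thesis unfolding B_def par jj .
  qed
  define coefk where "coefk k = 2 * fq ^ (d * k) / ((qpoch Q Q k)^2 * (1 + fq ^ (d * k)))" for k
  define Pa where "Pa k = (\<Prod>i<k. [:1, -(fq^r * Q^i):])" for k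
  define Pb where "Pb k = (\<Prod>i<k. [:-(cpd * Q^i), 1:])" for k
  define U where "U = (\<Sum>k<n. smult (coefk k) (Pa k * Pb k * monom 1 (n-1-k)))"
  have isEQ: "isE Q" unfolding Q_def by (intro isE_power isE_fq)
  have isEcpd: "isE cpd" unfolding cpd_def by (intro isE_powi isE_fq)
  have isEqp: "isE (qpoch Q Q k)" for k unfolding qpoch_def
    by (intro isE_prod isE_diff isE_mult isE_power isEQ isE_1)
  have isEU: "isEp U" unfolding U_def coefk_def Pa_def Pb_def
    by (intro isEp_sum isEp_smult isEp_mult isEp_prod isEp_pCons isEp_monom isE_divide isE_mult
        isE_power isE_numeral isE_fq isE_add isE_1 isEqp isE_uminus isEQ isEcpd isE_0 isEp_0)
  have polyPa: "poly (Pa k) y = qpoch (y * fq^r) Q k" for k y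
    unfolding Pa_def qpoch_def poly_prod by (intro prod.cong) (simp_all add: algebra_simps)
  have polyPb: "poly (Pb k) y = y^k * qpoch (cpd / y) Q k" if "y \<noteq> 0" for k y
  proof -
    have "poly (Pb k) y = (\<Prod>i<k. y * (1 - cpd / y * Q^i))"
      unfolding Pb_def poly_prod using that by (intro prod.cong) (simp_all add: field_simps)
    also have "\<dots> = y^k * qpoch (cpd / y) Q k" unfolding qpoch_def prod.distrib by simp
    finally show ?thesis .
  qed
  have polyU: "poly U y = y^(n-1) * T y" if "y \<noteq> 0" for y
  proof -
    have "poly U y = (\<Sum>k<n. y^(n-1) * (2 * qpoch (y * fq ^ r) (fq ^ d) k * qpoch (cpd / y) (fq ^ d) k
              * fq ^ (d * k) / ((qpoch (fq ^ d) (fq ^ d) k) ^ 2 * (1 + fq ^ (d * k)))))"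
      unfolding U_def poly_sum
    proof (intro sum.cong refl)
      fix k assume "k \<in> {..<n}"
      then have "y^k * y^(n-1-k) = y^(n-1)" by (simp flip: power_add)
      then show "poly (smult (coefk k) (Pa k * Pb k * monom 1 (n-1-k))) y = y^(n-1) * (2 * qpoch (y * fq ^ r) (fq ^ d) k * qpoch (cpd / y) (fq ^ d) k
              * fq ^ (d * k) / ((qpoch (fq ^ d) (fq ^ d) k) ^ 2 * (1 + fq ^ (d * k))))"
        unfolding polyPa polyPb[OF that] coefk_def Q_def poly_smult poly_mult poly_monom
        by (simp add: mult_ac)
    qed
    then show ?thesis unfolding T_def by (simp add: sum_distrib_left)
  qed
  define V0 where "V0 = U - monom B (n-1)"
  have isEB: "isE B" unfolding B_def by (intro isE_power isE_uminus isE_1)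
  have isEV0: "isEp V0" unfolding V0_def by (intro isEp_diff isEU isEp_monom isEB)
  have polyV0: "poly V0 y = y^(n-1) * (T y - B)" if "y \<noteq> 0" for y
    unfolding V0_def using polyU[OF that] by (simp add: poly_monom algebra_simps)
  have isEc1: "isE c1" unfolding c1_def by (intro isE_inverse isE_power isE_fq)
  have isEc2: "isE c2" unfolding c2_def by (intro isE_powi isE_fq)
  have c12: "c1 \<noteq> c2"
  proof
    assume h: "c1 = c2"
    have "c2 * fq ^ L = fq powi (e2 + int L)" unfolding c2_def using fq_nz
      by (simp add: power_int_add)
    also have "e2 + int L = int (n * d)" unfolding e2v L by (simp add: algebra_simps)
    finally have "c2 * fq ^ L = fq powi (int (n * d))" .
    then have "c2 * fq ^ L = fq ^ (n * d)" by (simp only: power_int_of_nat)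
    moreover have "c1 * fq ^ L = 1" unfolding c1_def using fq_nz by simp
    ultimately have "fq ^ (n * d) = 1" using h by simp
    then show False using fq_pow_ne1[of "n*d"] assms(1,2) by simp
  qed
  define V1 where "V1 = synthetic_div V0 c1"
  have V0c1: "poly V0 c1 = 0" using polyV0[OF c1nz] Tc1 by simp
  have V0eq: "V0 = [:-c1, 1:] * V1" using synthetic_div_correct'[of c1 V0] V0c1 unfolding V1_def by simp
  have isEV1: "isEp V1" unfolding V1_def by (intro isEp_synth isEV0 isEc1)
  have "poly V0 c2 = 0" using polyV0[OF c2nz] Tc2 by simp
  then have "(c2 - c1) * poly V1 c2 = 0" unfolding V0eq by auto
  then have V1c2: "poly V1 c2 = 0" using c12 by simp
  define W where "W = synthetic_div V1 c2"
  have V1eq: "V1 = [:-c2, 1:] * W" using synthetic_div_correct'[of c2 V1] V1c2 unfolding W_def by simp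
  have isEW: "isEp W" unfolding W_def by (intro isEp_synth isEV1 isEc2)
  obtain C v where Cv: "v \<noteq> 0" "poly W fa = to_fract C / to_fract [:v:]" using eval_isEp[OF isEW] by blast
  have key: "fa^(n-1) * (T fa - B) = (fa - c1) * ((fa - c2) * (to_fract C / to_fract [:v:]))"
  proof -
    have "poly V0 fa = (fa - c1) * ((fa - c2) * poly W fa)" unfolding V0eq V1eq by (simp add: algebra_simps)
    then show ?thesis using polyV0[OF fa_nz] Cv(2) by simp
  qed
  define s where "s = nat (- e2)"
  define s' where "s' = nat e2"
  define P1 where "P1 = 1 - var_a * var_q ^ L"
  define P2 where "P2 = var_a * var_q ^ s - var_q ^ s'"
  have fqL: "fq ^ L \<noteq> 0" using fq_nz by simp
  have fqs: "fq ^ s \<noteq> 0" using fq_nz by simp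
  have h1: "fa - c1 = - to_fract P1 / to_fract (var_q ^ L)"
    unfolding P1_def c1_def to_fract_diff to_fract_mult fq_pow[symmetric] fa_def[symmetric]
    using fqL by (simp add: field_simps)
  have h2: "fa - c2 = to_fract P2 / to_fract (var_q ^ s)"
  proof (cases "e2 \<ge> 0")
    case True
    then have "s = 0" "e2 = int s'" unfolding s_def s'_def by auto
    then show ?thesis unfolding P2_def c2_def to_fract_diff to_fract_mult fq_pow[symmetric] fa_def[symmetric]
      by simp
  next
    case False
    then have "s' = 0" "e2 = - int s" unfolding s_def s'_def by auto
    then show ?thesis unfolding P2_def c2_def to_fract_diff to_fract_mult fq_pow[symmetric] fa_def[symmetric]
      using fqs by (simp add: power_int_minus field_simps)
  qed
  define Dd where "Dd = var_q ^ L * var_q ^ s * [:v:] * var_a ^ (n-1)"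
  have vnz: "to_fract [:v:] \<noteq> 0" using Cv(1) by simp
  have fan: "fa ^ (n-1) \<noteq> 0" using fa_nz by simp
  have Ddnz: "Dd \<noteq> 0" unfolding Dd_def using Cv(1) by (simp add: var_q_def var_a_def)
  have eqn: "T fa - B = to_fract (P1 * P2) * to_fract (- C) / to_fract Dd"
  proof -
    have "T fa - B = fa^(n-1) * (T fa - B) / fa^(n-1)" using fan by simp
    also have "\<dots> = (fa - c1) * ((fa - c2) * (to_fract C / to_fract [:v:])) / fa^(n-1)"
      unfolding key ..
    also have "\<dots> = to_fract (P1 * P2) * to_fract (- C) / to_fract Dd"
      unfolding h1 h2 Dd_def to_fract_mult to_fract_uminus to_fract_power fa_def[symmetric]
      using vnz fan fqL fqs fa_nz unfolding fq_pow[symmetric] by (simp add: field_simps)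
    finally show ?thesis .
  qed
  have cp1: "coprime [:c:] P1" if "c \<noteq> 0" for c
    by (rule coprime_const[of _ _ 0]) (use that in \<open>simp_all add: P1_def var_a_def\<close>)
  have ca1: "coprime var_a P1" unfolding P1_def by (rule coprime_a_P1)
  have cp2: "coprime [:c:] P2 \<and> coprime var_a P2" if "c \<noteq> 0" for c
  proof (cases "e2 \<ge> 0")
    case True
    then have "s = 0" unfolding s_def by auto
    then have P2: "P2 = var_a - [:[:0,1:]^s':]" unfolding P2_def var_q_pow by simp
    show ?thesis unfolding P2
      by (intro conjI coprime_const[of _ _ 1] coprime_a_P2b) (use that in \<open>simp_all add: var_a_def\<close>)
  next
    case False
    then have "s' = 0" unfolding s'_def by auto
    then have P2: "P2 = var_a * var_q ^ s - 1" unfolding P2_def by simp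
    show ?thesis unfolding P2
      by (intro conjI coprime_const[of _ _ 0] coprime_a_P2a) (use that in \<open>simp_all add: var_a_def\<close>)
  qed
  have cop: "coprime Dd (P1 * P2)"
    unfolding Dd_def var_q_pow coprime_mult_left_iff coprime_power_left_iff coprime_mult_right_iff
    using cp1 cp2 ca1 Cv(1) by auto
  have S: "(\<Sum>k<n. 2 * qpoch (fa * fq ^ r) (fq ^ d) k * qpoch (fq powi (int d - int r) / fa) (fq ^ d) k
              * fq ^ (d * k) / ((qpoch (fq ^ d) (fq ^ d) k) ^ 2 * (1 + fq ^ (d * k)))) = T fa"
    unfolding T_def cpd_def ..
  show ?thesis unfolding cong_rf_def S
    by (rule exI[of _ "- C"], rule exI[of _ Dd]) (use eqn cop Ddnz in \<open>simp add: B_def P1_def P2_def L_def s_def s'_def\<close>)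
qed

end
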